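(* Let $I$ be a regular ideal in a Noetherian ring $A$ with Rees valuation rings $(V_1,\mathfrak{m}_1),\ldots,(V_r,\mathfrak{m}_r)$. Then $$I_>=\bigcap_i \mathfrak{m}_iIV_i\cap A.$$ In particular, $I_>$ is an integrally closed ideal.
   Context: A regular ideal is one containing a non-zero divisor. For $a\in A$, $\operatorname{ord}_I(a)=n$ if $a\in I^n\setminus I^{n+1}$ and $\infty$ if $a\in\bigcap_n I^n$; the asymptotic Samuel function is $\overline{v}_I(a)=\lim_{n\to\infty}\operatorname{ord}_I(a^n)/n$ (the limit exists, possibly $\infty$). $I_>=\{a\in A\mid \overline{v}_I(a)>1\}$. The Rees valuation rings of $I$ are the standard finite set of discrete rank one valuation rings $(V_i,\mathfrak{m}_i)$ (with valuations $v_i$) such that $\overline{v}_I(a)=\min_i v_i(a)/v_i(I)$, where $v_i(I)=\min\{v_i(b)\mid b\in I\}$; $IV_i$ and $\cap A$ are taken via the natural maps $A\to V_i$. *)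

theory Defs
  imports "HOL-Algebra.Algebra" "HOL-Library.Extended_Real"
begin

definition ideal_pow :: "('a, 'b) ring_scheme \<Rightarrow> 'a set \<Rightarrow> nat \<Rightarrow> 'a set" where
  "ideal_pow A I n = ((\<lambda>J. ideal_prod A I J) ^^ n) (carrier A)"

definition ord_ideal :: "('a, 'b) ring_scheme \<Rightarrow> 'a set \<Rightarrow> 'a \<Rightarrow> enat" where
  "ord_ideal A I a =
     (if (\<forall>n. a \<in> ideal_pow A I n) then \<infinity>
      else enat (THE n. a \<in> ideal_pow A I n \<and> a \<notin> ideal_pow A I (Suc n)))"

definition asymp_samuel :: "('a, 'b) ring_scheme \<Rightarrow> 'a set \<Rightarrow> 'a \<Rightarrow> ereal" where
  "asymp_samuel A I a =
     lim (\<lambda>n. ereal_of_enat (ord_ideal A I (a [^]\<^bsub>A\<^esub> n)) / ereal (real n))"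

definition I_greater :: "('a, 'b) ring_scheme \<Rightarrow> 'a set \<Rightarrow> 'a set" where
  "I_greater A I = {a \<in> carrier A. asymp_samuel A I a > 1}"

definition regular_ideal :: "('a, 'b) ring_scheme \<Rightarrow> 'a set \<Rightarrow> bool" where
  "regular_ideal A I \<longleftrightarrow> ideal I A \<and>
     (\<exists>x\<in>I. \<forall>y\<in>carrier A. x \<otimes>\<^bsub>A\<^esub> y = \<zero>\<^bsub>A\<^esub> \<longrightarrow> y = \<zero>\<^bsub>A\<^esub>)"

definition minimal_prime :: "('a, 'b) ring_scheme \<Rightarrow> 'a set \<Rightarrow> bool" where
  "minimal_prime A P \<longleftrightarrow> primeideal P A \<and>
     (\<forall>Q. primeideal Q A \<and> Q \<subseteq> P \<longrightarrow> Q = P)"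

definition integral_over_ideal :: "('a, 'b) ring_scheme \<Rightarrow> 'a set \<Rightarrow> 'a \<Rightarrow> bool" where
  "integral_over_ideal A J a \<longleftrightarrow> a \<in> carrier A \<and>
     (\<exists>n\<ge>1. \<exists>c. (\<forall>i\<in>{1..n}. c i \<in> ideal_pow A J i) \<and>
        (a [^]\<^bsub>A\<^esub> n) \<oplus>\<^bsub>A\<^esub>
          (\<Oplus>\<^bsub>A\<^esub>i\<in>{1..n}. c i \<otimes>\<^bsub>A\<^esub> (a [^]\<^bsub>A\<^esub> (n - i))) = \<zero>\<^bsub>A\<^esub>)"

definition integrally_closed_ideal :: "('a, 'b) ring_scheme \<Rightarrow> 'a set \<Rightarrow> bool" where
  "integrally_closed_ideal A J \<longleftrightarrow> ideal J A \<and>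
     {a. integral_over_ideal A J a} = J"

definition DVR_with_val :: "('v, 'c) ring_scheme \<Rightarrow> ('v \<Rightarrow> enat) \<Rightarrow> bool" where
  "DVR_with_val V v \<longleftrightarrow> domain V \<and> \<not> field V \<and>
     (\<forall>x\<in>carrier V. v x = \<infinity> \<longleftrightarrow> x = \<zero>\<^bsub>V\<^esub>) \<and>
     (\<forall>x\<in>carrier V. \<forall>y\<in>carrier V. v (x \<otimes>\<^bsub>V\<^esub> y) = v x + v y) \<and>
     (\<forall>x\<in>carrier V. \<forall>y\<in>carrier V. min (v x) (v y) \<le> v (x \<oplus>\<^bsub>V\<^esub> y)) \<and>
     (\<forall>x\<in>carrier V. \<forall>y\<in>carrier V. (x divides\<^bsub>V\<^esub> y) \<longleftrightarrow> v x \<le> v y) \<and>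
     (\<exists>t\<in>carrier V. v t = 1)"

definition max_ideal :: "('v, 'c) ring_scheme \<Rightarrow> 'v set" where
  "max_ideal V = (THE m. maximalideal m V)"

definition val_of_ideal :: "('v \<Rightarrow> enat) \<Rightarrow> ('a \<Rightarrow> 'v) \<Rightarrow> 'a set \<Rightarrow> enat" where
  "val_of_ideal v \<phi> I = (INF b\<in>I. v (\<phi> b))"

definition rees_formula ::
  "('a, 'b) ring_scheme \<Rightarrow> 'a set \<Rightarrow> nat set \<Rightarrow> (nat \<Rightarrow> 'a \<Rightarrow> 'v) \<Rightarrow> (nat \<Rightarrow> 'v \<Rightarrow> enat) \<Rightarrow> bool" where
  "rees_formula A I S \<phi> v \<longleftrightarrow>
     (\<forall>a\<in>carrier A. asymp_samuel A I a =
        (INF i\<in>S. ereal_of_enat (v i (\<phi> i a)) / ereal_of_enat (val_of_ideal (v i) (\<phi> i) I)))"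

text \<open>(V_i, v_i, phi_i), i < r, are the Rees valuation rings of I: each V_i is a rank one DVR
  receiving A via phi_i, whose kernel is a minimal prime P_i of A, with A/P_i \<subseteq> V_i \<subseteq> \<kappa>(P_i)
  (every element of V_i is a fraction of images of A), satisfying the Rees formula,
  and minimal with this property.\<close>
definition rees_valuation_rings ::
  "('a, 'b) ring_scheme \<Rightarrow> 'a set \<Rightarrow> nat \<Rightarrow> (nat \<Rightarrow> ('v, 'c) ring_scheme) \<Rightarrow>
   (nat \<Rightarrow> 'a \<Rightarrow> 'v) \<Rightarrow> (nat \<Rightarrow> 'v \<Rightarrow> enat) \<Rightarrow> bool" where
  "rees_valuation_rings A I r V \<phi> v \<longleftrightarrow>
     (\<forall>i<r. DVR_with_val (V i) (v i) \<and>
            \<phi> i \<in> ring_hom A (V i) \<and>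
            minimal_prime A {a \<in> carrier A. \<phi> i a = \<zero>\<^bsub>V i\<^esub>} \<and>
            (\<forall>x\<in>carrier (V i). \<exists>a\<in>carrier A. \<exists>b\<in>carrier A.
                \<phi> i b \<noteq> \<zero>\<^bsub>V i\<^esub> \<and> x \<otimes>\<^bsub>V i\<^esub> \<phi> i b = \<phi> i a)) \<and>
     rees_formula A I {..<r} \<phi> v \<and>
     (\<forall>S. S \<subset> {..<r} \<longrightarrow> \<not> rees_formula A I S \<phi> v)"

end

theory Submission
  imports Defs
begin


context fixes V :: "('v, 'c) ring_scheme" (structure) and v :: "'v \<Rightarrow> enat"
begin

lemma dvr_basic:
  assumes "DVR_with_val V v"
  shows "domain V"
    and "\<And>x. x \<in> carrier V \<Longrightarrow> v x = \<infinity> \<longleftrightarrow> x = \<zero>\<^bsub>V\<^esub>"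
    and "\<And>x y. x \<in> carrier V \<Longrightarrow> y \<in> carrier V \<Longrightarrow> v (x \<otimes>\<^bsub>V\<^esub> y) = v x + v y"
    and "\<And>x y. x \<in> carrier V \<Longrightarrow> y \<in> carrier V \<Longrightarrow> min (v x) (v y) \<le> v (x \<oplus>\<^bsub>V\<^esub> y)"
    and "\<And>x y. x \<in> carrier V \<Longrightarrow> y \<in> carrier V \<Longrightarrow> (x divides\<^bsub>V\<^esub> y) \<longleftrightarrow> v x \<le> v y"
  using assms unfolding DVR_with_val_def by auto

lemma dvr_one:
  assumes "DVR_with_val V v" shows "v \<one>\<^bsub>V\<^esub> = 0"
proof -
  interpret domain V by (rule dvr_basic(1)[OF assms])
  have "v \<one> = v \<one> + v \<one>" using dvr_basic(3)[OF assms, of \<one> \<one>] by simp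
  moreover have "v \<one> \<noteq> \<infinity>" using dvr_basic(2)[OF assms, of \<one>] by simp
  ultimately show ?thesis by (cases "v \<one>") (auto simp: zero_enat_def)
qed

lemma dvr_neg:
  assumes "DVR_with_val V v" "x \<in> carrier V" shows "v (\<ominus>\<^bsub>V\<^esub> x) = v x"
proof -
  interpret domain V by (rule dvr_basic(1)[OF assms(1)])
  have "x divides\<^bsub>V\<^esub> (\<ominus> x)"
    by (rule dividesI[of "\<ominus> \<one>"]) (use assms(2) in \<open>auto simp: r_minus\<close>)
  moreover have "(\<ominus> x) divides\<^bsub>V\<^esub> x"
    by (rule dividesI[of "\<ominus> \<one>"]) (use assms(2) in \<open>auto simp: r_minus\<close>)
  ultimately show ?thesis using dvr_basic(5)[OF assms(1)] assms(2) by (meson a_inv_closed order_antisym)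
qed

lemma dvr_ideal:
  assumes "DVR_with_val V v" shows "ideal {y \<in> carrier V. k \<le> v y} V"
proof -
  interpret domain V by (rule dvr_basic(1)[OF assms])
  note b = dvr_basic[OF assms]
  show ?thesis
  proof (rule idealI)
    show "ring V" by (rule ring_axioms)
    show "subgroup {y \<in> carrier V. k \<le> v y} (add_monoid V)"
    proof (rule subgroup.intro)
      show "{y \<in> carrier V. k \<le> v y} \<subseteq> carrier (add_monoid V)" by auto
      fix x y assume x: "x \<in> {y \<in> carrier V. k \<le> v y}" and y: "y \<in> {y \<in> carrier V. k \<le> v y}"
      then show "x \<otimes>\<^bsub>add_monoid V\<^esub> y \<in> {y \<in> carrier V. k \<le> v y}"
        using b(4)[of x y] by (auto simp: min_def split: if_splits)
    next
      show "\<one>\<^bsub>add_monoid V\<^esub> \<in> {y \<in> carrier V. k \<le> v y}" using b(2)[of \<zero>] by simp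
    next
      fix x assume x: "x \<in> {y \<in> carrier V. k \<le> v y}"
      then show "inv\<^bsub>add_monoid V\<^esub> x \<in> {y \<in> carrier V. k \<le> v y}"
        using dvr_neg[OF assms, of x] by (simp add: a_inv_def[symmetric])
    qed
  next
    fix a x assume "a \<in> {y \<in> carrier V. k \<le> v y}" "x \<in> carrier V"
    then show "x \<otimes>\<^bsub>V\<^esub> a \<in> {y \<in> carrier V. k \<le> v y}" "a \<otimes>\<^bsub>V\<^esub> x \<in> {y \<in> carrier V. k \<le> v y}"
      using b(3)[of x a] b(3)[of a x] by (auto intro: add_increasing add_increasing2)
  qed
qed


lemma dvr_val0_divides_one:
  assumes "DVR_with_val V v" "y \<in> carrier V" "v y = 0"
  shows "\<exists>c\<in>carrier V. \<one> = y \<otimes> c"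
proof -
  interpret domain V by (rule dvr_basic(1)[OF assms(1)])
  have "y divides \<one>" using dvr_basic(5)[OF assms(1) assms(2), of \<one>] dvr_one[OF assms(1)] assms(3) by simp
  then show ?thesis by (auto elim: dividesE)
qed

lemma enat_lt1: "(x::enat) < 1 \<longleftrightarrow> x = 0"
  by (cases x) (auto simp: one_enat_def zero_enat_def)


lemma dvr_max_ideal:
  assumes "DVR_with_val V v" shows "max_ideal V = {y \<in> carrier V. 1 \<le> v y}"
proof -
  interpret domain V by (rule dvr_basic(1)[OF assms])
  define M where "M = {y \<in> carrier V. 1 \<le> v y}"
  have idM: "ideal M V" unfolding M_def by (rule dvr_ideal[OF assms])
  have oneM: "\<one> \<notin> M" unfolding M_def using dvr_one[OF assms] by simp
  have key: "\<one> \<in> J" if "ideal J V" "y \<in> J" "y \<notin> M" for J y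
  proof -
    have yc: "y \<in> carrier V" using ideal.Icarr[OF that(1) that(2)] .
    have "\<not> 1 \<le> v y" using that(3) yc unfolding M_def by simp
    then have "v y = 0" by (simp add: not_le enat_lt1)
    then obtain c where c: "c \<in> carrier V" "\<one> = y \<otimes> c" using dvr_val0_divides_one[OF assms yc] by blast
    show ?thesis using ideal.I_r_closed[OF that(1) that(2) c(1)] c(2) by simp
  qed
  have maxM: "maximalideal M V"
  proof (rule maximalidealI[OF idM])
    show "carrier V \<noteq> M" using oneM by auto
    fix J assume J: "ideal J V" "M \<subseteq> J" "J \<subseteq> carrier V"
    show "J = M \<or> J = carrier V"
    proof (cases "J = M")
      case False
      then obtain y where "y \<in> J" "y \<notin> M" using J by blast
      then have "\<one> \<in> J" using key J by blast
      then show ?thesis using ideal.one_imp_carrier[OF J(1)] by blast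
    qed simp
  qed
  have uniq: "Q = M" if "maximalideal Q V" for Q
  proof -
    interpret Q: maximalideal Q V by fact
    have "Q \<subseteq> M"
    proof
      fix y assume "y \<in> Q"
      show "y \<in> M"
      proof (rule ccontr)
        assume "y \<notin> M"
        then have "\<one> \<in> Q" using key[OF Q.is_ideal \<open>y \<in> Q\<close>] by blast
        then show False using Q.one_imp_carrier Q.I_notcarr by auto
      qed
    qed
    then have "M = Q \<or> M = carrier V" using Q.I_maximal[OF idM] M_def by auto
    then show ?thesis using oneM by auto
  qed
  show ?thesis unfolding max_ideal_def M_def[symmetric]
    using maxM uniq by (rule the_equality)
qed


lemma dvr_Idl:
  assumes "DVR_with_val V v" "S \<subseteq> carrier V" "s \<in> S" "\<forall>t\<in>S. v s \<le> v t"
  shows "Idl S = {y \<in> carrier V. v s \<le> v y}"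
proof -
  interpret domain V by (rule dvr_basic(1)[OF assms(1)])
  have sc: "s \<in> carrier V" using assms by auto
  show ?thesis
  proof
    show "Idl S \<subseteq> {y \<in> carrier V. v s \<le> v y}"
      by (rule genideal_minimal[OF dvr_ideal[OF assms(1)]]) (use assms in auto)
  next
    show "{y \<in> carrier V. v s \<le> v y} \<subseteq> Idl S"
    proof
      fix y assume y: "y \<in> {y \<in> carrier V. v s \<le> v y}"
      then have "s divides y" using dvr_basic(5)[OF assms(1) sc] by auto
      then obtain c where c: "c \<in> carrier V" "y = s \<otimes> c" by (auto elim: dividesE)
      have "s \<in> Idl S" using genideal_self[OF assms(2)] assms(3) by auto
      then show "y \<in> Idl S" using c ideal.I_r_closed[OF genideal_ideal[OF assms(2)]] by simp
    qed
  qed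
qed


lemma dvr_prod:
  assumes "DVR_with_val V v" "s \<in> carrier V" "v s = enat k"
  shows "ideal_prod V {y \<in> carrier V. 1 \<le> v y} {y \<in> carrier V. enat k \<le> v y}
          = {y \<in> carrier V. enat (Suc k) \<le> v y}"
proof -
  interpret domain V by (rule dvr_basic(1)[OF assms(1)])
  note b = dvr_basic[OF assms(1)]
  show ?thesis
  proof
    show "ideal_prod V {y \<in> carrier V. 1 \<le> v y} {y \<in> carrier V. enat k \<le> v y}
          \<subseteq> {y \<in> carrier V. enat (Suc k) \<le> v y}"
    proof
      fix x assume "x \<in> ideal_prod V {y \<in> carrier V. 1 \<le> v y} {y \<in> carrier V. enat k \<le> v y}"
      then show "x \<in> {y \<in> carrier V. enat (Suc k) \<le> v y}"
      proof (induct x rule: ideal_prod.induct)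
        case (prod i j)
        then have "v (i \<otimes> j) = v i + v j" using b(3) by auto
        moreover have "1 + enat k \<le> v i + v j" using prod by (intro add_mono) auto
        then have "enat (Suc k) \<le> v i + v j" by (simp add: one_enat_def)
        ultimately show ?case using prod by auto
      next
        case (sum s1 s2)
        then show ?case using b(4)[of s1 s2] by (auto simp: min_def split: if_splits)
      qed
    qed
  next
    show "{y \<in> carrier V. enat (Suc k) \<le> v y} \<subseteq>
          ideal_prod V {y \<in> carrier V. 1 \<le> v y} {y \<in> carrier V. enat k \<le> v y}"
    proof
      fix y assume y: "y \<in> {y \<in> carrier V. enat (Suc k) \<le> v y}"
      then have "enat k \<le> v y" using order_trans[of "enat k" "enat (Suc k)"] by auto
      then have "s divides y" using b(5)[OF assms(2), of y] assms(3) y by auto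
      then obtain c where c: "c \<in> carrier V" "y = s \<otimes> c" by (auto elim: dividesE)
      have "v y = enat k + v c" using c b(3)[OF assms(2) c(1)] assms(3) by simp
      with y have "1 \<le> v c"
        by (cases "v c") (auto simp: one_enat_def)
      then have "c \<otimes> s \<in> ideal_prod V {y \<in> carrier V. 1 \<le> v y} {y \<in> carrier V. enat k \<le> v y}"
        using c assms by (intro ideal_prod.prod) auto
      then show "y \<in> ideal_prod V {y \<in> carrier V. 1 \<le> v y} {y \<in> carrier V. enat k \<le> v y}"
        using c assms(2) m_comm by simp
    qed
  qed
qed


lemma dvr_finsum:
  assumes "DVR_with_val V v" "finite F" "f \<in> F \<rightarrow> carrier V" "\<forall>k\<in>F. e \<le> v (f k)"
  shows "e \<le> v (finsum V f F)"
  using assms(2,3,4)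
proof (induct F rule: finite_induct)
  case empty
  interpret domain V by (rule dvr_basic(1)[OF assms(1)])
  show ?case using dvr_basic(2)[OF assms(1), of \<zero>] by simp
next
  case (insert x F)
  interpret domain V by (rule dvr_basic(1)[OF assms(1)])
  have "finsum V f (insert x F) = f x \<oplus> finsum V f F"
    using insert by (intro finsum_insert) auto
  moreover have "e \<le> v (finsum V f F)" using insert by auto
  moreover have "min (v (f x)) (v (finsum V f F)) \<le> v (f x \<oplus> finsum V f F)"
    using insert by (intro dvr_basic(4)[OF assms(1)]) auto
  ultimately show ?case using insert by (auto simp: min_def split: if_splits)
qed


lemma dvr_pow:
  assumes "DVR_with_val V v" "x \<in> carrier V"
  shows "v (x [^]\<^bsub>V\<^esub> (n::nat)) = of_nat n * v x"
proof (induct n)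
  case 0
  interpret domain V by (rule dvr_basic(1)[OF assms(1)])
  show ?case using dvr_one[OF assms(1)] by simp
next
  case (Suc n)
  interpret domain V by (rule dvr_basic(1)[OF assms(1)])
  show ?case using Suc dvr_basic(3)[OF assms(1), of "x [^] n" x] assms(2)
    by (simp add: algebra_simps)
qed


end



lemma ratio_gt1:
  "1 < ereal_of_enat x / ereal_of_enat (enat m) \<longleftrightarrow> enat m < x"
proof (cases x)
  case (enat p)
  show ?thesis
  proof (cases "m = 0")
    case True
    then show ?thesis using enat by (cases "p = 0") (auto simp: zero_enat_def divide_ereal_def)
  next
    case False
    then show ?thesis using enat by (auto simp: divide_ereal_def field_simps)
  qed
next
  case infinity
  then show ?thesis by (cases "m = 0") (auto simp: divide_ereal_def)
qed

lemma div_inf0: "ereal_of_enat x / ereal_of_enat \<infinity> = 0"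
  by (simp add: divide_ereal_def)

lemma zero_in_pow:
  assumes "ring A" "ideal I A" shows "\<zero>\<^bsub>A\<^esub> \<in> ideal_pow A I n"
proof -
  interpret ring A by fact
  show ?thesis
  proof (induct n)
    case 0 then show ?case by (simp add: ideal_pow_def)
  next
    case (Suc n)
    have "\<zero>\<^bsub>A\<^esub> \<otimes>\<^bsub>A\<^esub> \<zero>\<^bsub>A\<^esub> \<in> ideal_prod A I (ideal_pow A I n)"
      by (rule ideal_prod.prod) (use Suc assms in \<open>auto simp: additive_subgroup.zero_closed ideal.axioms(1)\<close>)
    then show ?case by (simp add: ideal_pow_def)
  qed
qed

lemma samuel_zero:
  assumes "ring A" "ideal I A" shows "asymp_samuel A I \<zero>\<^bsub>A\<^esub> = \<infinity>"
proof -
  have ord: "ord_ideal A I \<zero>\<^bsub>A\<^esub> = \<infinity>" using zero_in_pow[OF assms] by (simp add: ord_ideal_def)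
  let ?f = "\<lambda>n. ereal_of_enat (ord_ideal A I (\<zero>\<^bsub>A\<^esub> [^]\<^bsub>A\<^esub> n)) / ereal (real n)"
  have "\<forall>\<^sub>F n in sequentially. ?f n = \<infinity>"
  proof (rule eventually_sequentiallyI[of 1])
    fix n :: nat assume "1 \<le> n"
    interpret ring A by fact
    have "\<zero>\<^bsub>A\<^esub> [^]\<^bsub>A\<^esub> n = \<zero>\<^bsub>A\<^esub>" using nat_pow_zero[of n] \<open>1 \<le> n\<close> by simp
    then show "?f n = \<infinity>" using ord \<open>1 \<le> n\<close> by (simp add: divide_ereal_def)
  qed
  then have "?f \<longlonglongrightarrow> \<infinity>" by (rule tendsto_eventually)
  then show ?thesis unfolding asymp_samuel_def by (rule limI)
qed

lemma val_attained:
  assumes "ideal I A"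
  shows "\<exists>b\<in>I. w (\<phi> b) = val_of_ideal w \<phi> I" and "\<And>x. x \<in> I \<Longrightarrow> val_of_ideal w \<phi> I \<le> w (\<phi> x)"
proof -
  have ne: "I \<noteq> {}" using assms additive_subgroup.zero_closed ideal.axioms(1) by blast
  have "Inf ((\<lambda>b. w (\<phi> b)) ` I) \<in> (\<lambda>b. w (\<phi> b)) ` I"
    using ne unfolding Inf_enat_def by (auto intro: LeastI)
  then show "\<exists>b\<in>I. w (\<phi> b) = val_of_ideal w \<phi> I" unfolding val_of_ideal_def by auto
  show "\<And>x. x \<in> I \<Longrightarrow> val_of_ideal w \<phi> I \<le> w (\<phi> x)"
    unfolding val_of_ideal_def by (rule INF_lower)
qed

theorem lemma4p2:
  fixes A :: "('a, 'b) ring_scheme" and I :: "'a set" and r :: nat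
    and V :: "nat \<Rightarrow> ('v, 'c) ring_scheme" and \<phi> :: "nat \<Rightarrow> 'a \<Rightarrow> 'v"
    and v :: "nat \<Rightarrow> 'v \<Rightarrow> enat"
  assumes "cring A" and "noetherian_ring A"
    and "regular_ideal A I"
    and "rees_valuation_rings A I r V \<phi> v"
  shows "I_greater A I =
           carrier A \<inter> (\<Inter>i\<in>{..<r}.
              {a \<in> carrier A. \<phi> i a \<in> ideal_prod (V i) (max_ideal (V i)) (Idl\<^bsub>V i\<^esub> (\<phi> i ` I))}) \<and>
         integrally_closed_ideal A (I_greater A I)"
proof -
  interpret A: cring A by fact
  have idI: "ideal I A" using assms(3) unfolding regular_ideal_def by auto
  have DV: "\<And>i. i < r \<Longrightarrow> DVR_with_val (V i) (v i)"
    and HM: "\<And>i. i < r \<Longrightarrow> \<phi> i \<in> ring_hom A (V i)"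
    and RF: "rees_formula A I {..<r} \<phi> v"
    using assms(4) unfolding rees_valuation_rings_def by auto
  have dom: "\<And>i. i < r \<Longrightarrow> domain (V i)" using DV dvr_basic(1) by blast
  have RH: "\<And>i. i < r \<Longrightarrow> ring_hom_ring A (V i) (\<phi> i)"
    using HM dom by (intro ring_hom_ringI2) (auto simp: A.ring_axioms domain_def cring_def)
  define w where "w i = val_of_ideal (v i) (\<phi> i) I" for i
  have watt: "\<exists>b\<in>I. v i (\<phi> i b) = w i" for i using val_attained(1)[OF idI] unfolding w_def by blast
  have wle: "\<And>i x. x \<in> I \<Longrightarrow> w i \<le> v i (\<phi> i x)" using val_attained(2)[OF idI] unfolding w_def by blast
  have zinf: "asymp_samuel A I \<zero>\<^bsub>A\<^esub> = \<infinity>" by (rule samuel_zero[OF A.ring_axioms idI])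
  have wfin: "w i \<noteq> \<infinity>" if "i < r" for i
  proof
    assume wi: "w i = \<infinity>"
    have "asymp_samuel A I \<zero>\<^bsub>A\<^esub> \<le> ereal_of_enat (v i (\<phi> i \<zero>\<^bsub>A\<^esub>)) / ereal_of_enat (w i)"
      using RF that unfolding rees_formula_def w_def by (auto intro: INF_lower)
    then show False using zinf wi div_inf0 by simp
  qed
  define W where "W i = the_enat (w i)" for i
  have wW: "\<And>i. i < r \<Longrightarrow> w i = enat (W i)" using wfin unfolding W_def by (metis not_infinity_eq the_enat.simps)
  have CHAR: "1 < asymp_samuel A I a \<longleftrightarrow> (\<forall>i<r. w i < v i (\<phi> i a))" if a: "a \<in> carrier A" for a
  proof -
    have eq: "asymp_samuel A I a = (INF i\<in>{..<r}. ereal_of_enat (v i (\<phi> i a)) / ereal_of_enat (w i))"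
      using RF a unfolding rees_formula_def w_def by auto
    show ?thesis
    proof (cases "r = 0")
      case True then show ?thesis using eq by (simp add: top_ereal_def)
    next
      case False
      then have "1 < asymp_samuel A I a \<longleftrightarrow> (\<forall>i<r. 1 < ereal_of_enat (v i (\<phi> i a)) / ereal_of_enat (w i))"
        unfolding eq by (subst finite_less_Inf_iff) auto
      also have "\<dots> \<longleftrightarrow> (\<forall>i<r. w i < v i (\<phi> i a))" using wW ratio_gt1 by auto
      finally show ?thesis .
    qed
  qed
  have MEM: "\<phi> i a \<in> ideal_prod (V i) (max_ideal (V i)) (Idl\<^bsub>V i\<^esub> (\<phi> i ` I)) \<longleftrightarrow> w i < v i (\<phi> i a)"
    if i: "i < r" and a: "a \<in> carrier A" for i a
  proof -
    interpret h: ring_hom_ring A "V i" "\<phi> i" by (rule RH[OF i])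
    obtain b where b: "b \<in> I" "v i (\<phi> i b) = w i" using watt by blast
    have bc: "b \<in> carrier A" using ideal.Icarr[OF idI b(1)] .
    have Is: "\<phi> i ` I \<subseteq> carrier (V i)" using ideal.Icarr[OF idI] h.hom_closed by auto
    have "Idl\<^bsub>V i\<^esub> (\<phi> i ` I) = {y \<in> carrier (V i). v i (\<phi> i b) \<le> v i y}"
      by (rule dvr_Idl[OF DV[OF i] Is]) (use b wle in auto)
    then have "ideal_prod (V i) (max_ideal (V i)) (Idl\<^bsub>V i\<^esub> (\<phi> i ` I))
       = {y \<in> carrier (V i). enat (Suc (W i)) \<le> v i y}"
      using dvr_max_ideal[OF DV[OF i]] dvr_prod[OF DV[OF i] h.hom_closed[OF bc], of "W i"] b wW[OF i]
      by simp
    then show ?thesis using h.hom_closed[OF a] wW[OF i] by (simp add: Suc_ile_eq)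
  qed
  define C where "C = {a \<in> carrier A. \<forall>i<r. w i < v i (\<phi> i a)}"
  have IG: "I_greater A I = C" unfolding I_greater_def C_def using CHAR by auto
  have part1: "I_greater A I =
           carrier A \<inter> (\<Inter>i\<in>{..<r}.
              {a \<in> carrier A. \<phi> i a \<in> ideal_prod (V i) (max_ideal (V i)) (Idl\<^bsub>V i\<^esub> (\<phi> i ` I))})"
    unfolding IG C_def using MEM by auto

  have VA: "min (v i (\<phi> i x)) (v i (\<phi> i y)) \<le> v i (\<phi> i (x \<oplus>\<^bsub>A\<^esub> y))"
    if "i < r" "x \<in> carrier A" "y \<in> carrier A" for i x y
  proof -
    interpret h: ring_hom_ring A "V i" "\<phi> i" by (rule RH[OF that(1)])
    show ?thesis using dvr_basic(4)[OF DV[OF that(1)] h.hom_closed[OF that(2)] h.hom_closed[OF that(3)]] that by simp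
  qed
  have VM: "v i (\<phi> i (x \<otimes>\<^bsub>A\<^esub> y)) = v i (\<phi> i x) + v i (\<phi> i y)"
    if "i < r" "x \<in> carrier A" "y \<in> carrier A" for i x y
  proof -
    interpret h: ring_hom_ring A "V i" "\<phi> i" by (rule RH[OF that(1)])
    show ?thesis using dvr_basic(3)[OF DV[OF that(1)] h.hom_closed[OF that(2)] h.hom_closed[OF that(3)]] that by simp
  qed
  have VN: "v i (\<phi> i (\<ominus>\<^bsub>A\<^esub> x)) = v i (\<phi> i x)" if "i < r" "x \<in> carrier A" for i x
  proof -
    interpret h: ring_hom_ring A "V i" "\<phi> i" by (rule RH[OF that(1)])
    show ?thesis using dvr_neg[OF DV[OF that(1)] h.hom_closed[OF that(2)]] that by simp
  qed
  have VZ: "v i (\<phi> i \<zero>\<^bsub>A\<^esub>) = \<infinity>" if "i < r" for i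
  proof -
    interpret h: ring_hom_ring A "V i" "\<phi> i" by (rule RH[OF that(1)])
    show ?thesis using dvr_basic(2)[OF DV[OF that(1)], of "\<zero>\<^bsub>V i\<^esub>"] by simp
  qed
  have VP: "v i (\<phi> i (x [^]\<^bsub>A\<^esub> (n::nat))) = of_nat n * v i (\<phi> i x)" if "i < r" "x \<in> carrier A" for i x n
  proof -
    interpret h: ring_hom_ring A "V i" "\<phi> i" by (rule RH[OF that(1)])
    show ?thesis using dvr_pow[OF DV[OF that(1)] h.hom_closed[OF that(2)]] h.hom_nat_pow[OF that(2)] by simp
  qed
  have Cc: "C \<subseteq> carrier A" by (auto simp: C_def)
  have addC: "x \<oplus>\<^bsub>A\<^esub> y \<in> C" if "x \<in> C" "y \<in> C" for x y
  proof -
    have "w i < v i (\<phi> i (x \<oplus>\<^bsub>A\<^esub> y))" if i: "i < r" for i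
    proof -
      have "w i < min (v i (\<phi> i x)) (v i (\<phi> i y))" using \<open>x \<in> C\<close> \<open>y \<in> C\<close> i by (simp add: C_def)
      moreover have "x \<in> carrier A" "y \<in> carrier A" using \<open>x \<in> C\<close> \<open>y \<in> C\<close> Cc by auto
      ultimately show ?thesis using VA[OF i, of x y] less_le_trans by blast
    qed
    then show ?thesis using that Cc by (auto simp: C_def)
  qed
  have mulC: "x \<otimes>\<^bsub>A\<^esub> a \<in> C" "a \<otimes>\<^bsub>A\<^esub> x \<in> C" if "a \<in> C" "x \<in> carrier A" for a x
  proof -
    have ac: "a \<in> carrier A" using that Cc by auto
    have "w i < v i (\<phi> i (x \<otimes>\<^bsub>A\<^esub> a))" if i: "i < r" for i
    proof -
      have "w i < v i (\<phi> i a)" using \<open>a \<in> C\<close> i by (simp add: C_def)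
      also have "\<dots> \<le> v i (\<phi> i x) + v i (\<phi> i a)" by (simp add: add_increasing)
      finally show ?thesis using VM[OF i \<open>x \<in> carrier A\<close> ac] by simp
    qed
    then show "x \<otimes>\<^bsub>A\<^esub> a \<in> C" using that ac by (auto simp: C_def)
    then show "a \<otimes>\<^bsub>A\<^esub> x \<in> C" using that ac A.m_comm by simp
  qed
  have idC: "ideal C A"
  proof (rule idealI)
    show "ring A" by (rule A.ring_axioms)
    show "subgroup C (add_monoid A)"
    proof (rule subgroup.intro)
      show "C \<subseteq> carrier (add_monoid A)" using Cc by simp
      fix x y assume x: "x \<in> C" and y: "y \<in> C"
      show "x \<otimes>\<^bsub>add_monoid A\<^esub> y \<in> C" using addC[OF x y] by simp
    next
      show "\<one>\<^bsub>add_monoid A\<^esub> \<in> C" using VZ wW by (simp add: C_def)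
    next
      fix x assume x: "x \<in> C"
      have "\<ominus>\<^bsub>A\<^esub> x \<in> C" using x Cc VN by (auto simp: C_def)
      then show "inv\<^bsub>add_monoid A\<^esub> x \<in> C" by (simp add: a_inv_def)
    qed
  qed (use mulC in auto)
  have POW: "ideal_pow A C k \<subseteq> {c \<in> carrier A. \<forall>i<r. enat (k * Suc (W i)) \<le> v i (\<phi> i c)}" for k
  proof (induct k)
    case 0 then show ?case by (auto simp: ideal_pow_def zero_enat_def[symmetric])
  next
    case (Suc k)
    have "ideal_pow A C (Suc k) = ideal_prod A C (ideal_pow A C k)" by (simp add: ideal_pow_def)
    moreover have "ideal_prod A C (ideal_pow A C k) \<subseteq> {c \<in> carrier A. \<forall>i<r. enat (Suc k * Suc (W i)) \<le> v i (\<phi> i c)}"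
    proof
      fix x assume "x \<in> ideal_prod A C (ideal_pow A C k)"
      then show "x \<in> {c \<in> carrier A. \<forall>i<r. enat (Suc k * Suc (W i)) \<le> v i (\<phi> i c)}"
      proof (induct x rule: ideal_prod.induct)
        case (prod c d)
        have cc: "c \<in> carrier A" using prod Cc by auto
        have dc: "d \<in> carrier A" and dv: "\<forall>i<r. enat (k * Suc (W i)) \<le> v i (\<phi> i d)" using prod Suc by auto
        have "enat (Suc k * Suc (W i)) \<le> v i (\<phi> i (c \<otimes>\<^bsub>A\<^esub> d))" if i: "i < r" for i
        proof -
          have "enat (W i) < v i (\<phi> i c)" using prod(1) i wW[OF i] unfolding C_def by force
          then have "enat (Suc (W i)) \<le> v i (\<phi> i c)" by (simp add: Suc_ile_eq)
          then have "enat (Suc (W i)) + enat (k * Suc (W i)) \<le> v i (\<phi> i c) + v i (\<phi> i d)"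
            using dv i by (intro add_mono) auto
          then show ?thesis using VM[OF i cc dc] by (simp add: algebra_simps)
        qed
        then show ?case using cc dc by auto
      next
        case (sum s1 s2)
        have "enat (Suc k * Suc (W i)) \<le> v i (\<phi> i (s1 \<oplus>\<^bsub>A\<^esub> s2))" if i: "i < r" for i
          using VA[OF i, of s1 s2] sum i by (auto simp: min_def split: if_splits)
        then show ?case using sum by auto
      qed
    qed
    ultimately show ?case by simp
  qed
  have INTEG: "a \<in> C" if ia: "integral_over_ideal A C a" for a
  proof -
    obtain n c where ac: "a \<in> carrier A" and n: "n \<ge> 1" and cI: "\<forall>i\<in>{1..n}. c i \<in> ideal_pow A C i"
      and eqn: "(a [^]\<^bsub>A\<^esub> n) \<oplus>\<^bsub>A\<^esub> (\<Oplus>\<^bsub>A\<^esub>i\<in>{1..n}. c i \<otimes>\<^bsub>A\<^esub> (a [^]\<^bsub>A\<^esub> (n - i))) = \<zero>\<^bsub>A\<^esub>"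
      using ia unfolding integral_over_ideal_def by blast
    define f where "f k = c k \<otimes>\<^bsub>A\<^esub> (a [^]\<^bsub>A\<^esub> (n - k))" for k
    have cc: "c k \<in> carrier A" and cv: "\<forall>i<r. enat (k * Suc (W i)) \<le> v i (\<phi> i (c k))" if "k \<in> {1..n}" for k
    proof -
      have "c k \<in> ideal_pow A C k" using cI that by blast
      then have "c k \<in> {c \<in> carrier A. \<forall>i<r. enat (k * Suc (W i)) \<le> v i (\<phi> i c)}"
        using POW[of k] by blast
      then show "c k \<in> carrier A" "\<forall>i<r. enat (k * Suc (W i)) \<le> v i (\<phi> i (c k))" by auto
    qed
    have fc: "f \<in> {1..n} \<rightarrow> carrier A" using cc ac by (auto simp: f_def)
    have "w i < v i (\<phi> i a)" if i: "i < r" for i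
    proof (rule ccontr)
      assume "\<not> w i < v i (\<phi> i a)"
      then have le: "v i (\<phi> i a) \<le> enat (W i)" using wW[OF i] by (simp add: not_less)
      then obtain p where p: "v i (\<phi> i a) = enat p" "p \<le> W i"
        by (cases "v i (\<phi> i a)") auto
      interpret h: ring_hom_ring A "V i" "\<phi> i" by (rule RH[OF i])
      interpret Vi: domain "V i" by (rule dom[OF i])
      have fv: "enat (n * p + 1) \<le> v i (\<phi> i (f k))" if k: "k \<in> {1..n}" for k
      proof -
        have "v i (\<phi> i (f k)) = v i (\<phi> i (c k)) + of_nat (n - k) * enat p"
          unfolding f_def using VM[OF i cc[OF k] A.nat_pow_closed[OF ac, of "n - k"]] VP[OF i ac] p k by simp
        moreover have "enat (k * Suc (W i)) \<le> v i (\<phi> i (c k))" using cv[OF k] i by auto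
        ultimately have "enat (k * Suc (W i) + (n - k) * p) \<le> v i (\<phi> i (f k))"
          by (metis add_right_mono of_nat_eq_enat plus_enat_simps(1) times_enat_simps(1))
        moreover have "n * p + 1 \<le> k * Suc (W i) + (n - k) * p"
        proof -
          have A1: "k * p \<le> k * W i" using p(2) by simp
          have "n = k + (n - k)" using k by simp
          then have A2: "n * p = k * p + (n - k) * p" by (metis add_mult_distrib)
          have A3: "k * Suc (W i) = k + k * W i" by simp
          have A4: "1 \<le> k" using k by simp
          show ?thesis using A1 A2 A3 A4 by linarith
        qed
        ultimately show ?thesis by (meson enat_ord_simps(1) order_trans)
      qed
      define S where "S = (\<Oplus>\<^bsub>A\<^esub>k\<in>{1..n}. f k)"
      have Sc: "S \<in> carrier A" unfolding S_def using fc by (rule A.finsum_closed)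
      have "\<phi> i S = (\<Oplus>\<^bsub>V i\<^esub>k\<in>{1..n}. (\<phi> i \<circ> f) k)" unfolding S_def using fc by (rule h.hom_finsum)
      moreover have "enat (n * p + 1) \<le> v i (\<Oplus>\<^bsub>V i\<^esub>k\<in>{1..n}. (\<phi> i \<circ> f) k)"
        by (rule dvr_finsum[OF DV[OF i]]) (use fc fv in \<open>auto intro: h.hom_closed simp: Pi_def\<close>)
      ultimately have Sv: "enat (n * p + 1) \<le> v i (\<phi> i S)" by simp
      have anc: "a [^]\<^bsub>A\<^esub> n \<in> carrier A" using ac by simp
      have "a [^]\<^bsub>A\<^esub> n \<oplus>\<^bsub>A\<^esub> S = \<zero>\<^bsub>A\<^esub>" using eqn unfolding S_def f_def .
      then have "\<ominus>\<^bsub>A\<^esub> S = a [^]\<^bsub>A\<^esub> n" using A.minus_equality Sc anc by blast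
      then have "v i (\<phi> i (a [^]\<^bsub>A\<^esub> n)) = v i (\<phi> i S)" using VN[OF i Sc] by simp
      moreover have "v i (\<phi> i (a [^]\<^bsub>A\<^esub> n)) = enat (n * p)" using VP[OF i ac] p
        by (simp add: of_nat_eq_enat)
      ultimately have "enat (n * p + 1) \<le> enat (n * p)" using Sv by simp
      then show False by simp
    qed
    then show ?thesis using ac by (simp add: C_def)
  qed
  have CI: "integral_over_ideal A C a" if a: "a \<in> C" for a
  proof -
    have ac: "a \<in> carrier A" using a Cc by auto
    have na: "\<ominus>\<^bsub>A\<^esub> a \<in> C" using ideal.I_l_closed[OF idC a, of "\<ominus>\<^bsub>A\<^esub> \<one>\<^bsub>A\<^esub>"] ac
      by (simp add: A.l_minus)
    have "(\<ominus>\<^bsub>A\<^esub> a) \<otimes>\<^bsub>A\<^esub> \<one>\<^bsub>A\<^esub> \<in> ideal_prod A C (carrier A)"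
      by (rule ideal_prod.prod) (use na in auto)
    then have m1: "\<ominus>\<^bsub>A\<^esub> a \<in> ideal_pow A C 1" using ac by (simp add: ideal_pow_def)
    have "(a [^]\<^bsub>A\<^esub> (1::nat)) \<oplus>\<^bsub>A\<^esub> (\<Oplus>\<^bsub>A\<^esub>i\<in>{1..1::nat}. (\<lambda>_. \<ominus>\<^bsub>A\<^esub> a) i \<otimes>\<^bsub>A\<^esub> (a [^]\<^bsub>A\<^esub> (1 - i))) = \<zero>\<^bsub>A\<^esub>"
      using ac by (simp add: A.r_neg)
    then show ?thesis unfolding integral_over_ideal_def using ac m1
      by (intro conjI exI[of _ "1::nat"] exI[of _ "\<lambda>_. \<ominus>\<^bsub>A\<^esub> a"]) auto
  qed
  have "integrally_closed_ideal A C"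
    unfolding integrally_closed_ideal_def using idC INTEG CI by blast
  then show ?thesis using part1 IG by simp
qed


end
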